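(* Let $\phi:\mathbb{R}^d\to\mathbb{R}^d$ be a bi-Lipschitz homeomorphism preserving Lebesgue measure, let $K_\phi$ and $\rho_a$ be as in the context, and fix $a\in[0,1]$. Then for every ball $B=B(x_0,r)$ in $\mathbb{R}^d$ (with radius $r_B=r$) there exists a collection $(O_k)_k$ of balls in $\mathbb{R}^d$, with radii $r_{O_k}$, such that: (i) the collection of doubled balls $(2O_k)_k$ is a bounded covering of $\phi(B)$, i.e. $\phi(B)\subset\bigcup_k 2O_k$ and every point of $\mathbb{R}^d$ belongs to at most $N$ of the balls $2O_k$, with $N$ depending only on $d$; (ii) the balls $(O_k)_k$ are pairwise disjoint; (iii) for every $p\in[1,\infty)$, $$\left(\frac{1}{|B|}\sum_k |O_k|\,\rho_a\!\left(\frac{r_B}{r_{O_k}}\right)^p\right)^{1/p}\le C\,\rho_a(K_\phi),$$ where $C$ depends only on the dimension $d$, on $a$ and on $p$ (not on $B$ or $\phi$).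
   Context: For a bi-Lipschitz homeomorphism $\phi$ of $\mathbb{R}^d$, $K_\phi:=\sup_{x\neq y}\left(\frac{|\phi(x)-\phi(y)|}{|x-y|}+\frac{|x-y|}{|\phi(x)-\phi(y)|}\right)$. "Preserving Lebesgue measure" means $|\phi(A)|=|A|$ for all measurable $A$. For $a\in[0,1]$, $\rho_a:[0,\infty)\to\mathbb{R}$ is defined by $\rho_a(r)=r^a$ if $a>0$ and $\rho_0(r)=\log(r)$. For a ball $O=B(x,s)$, $2O$ denotes $B(x,2s)$. *)

theory Defs
  imports "HOL-Analysis.Analysis"
begin

definition bi_lipschitz_homeo :: "('a::euclidean_space \<Rightarrow> 'a) \<Rightarrow> bool" where
  "bi_lipschitz_homeo \<phi> \<longleftrightarrow>
     (\<exists>\<psi>. homeomorphism UNIV UNIV \<phi> \<psi>) \<and>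
     (\<exists>L. \<forall>x y. dist (\<phi> x) (\<phi> y) \<le> L * dist x y \<and> dist x y \<le> L * dist (\<phi> x) (\<phi> y))"

definition preserves_lebesgue :: "('a::euclidean_space \<Rightarrow> 'a) \<Rightarrow> bool" where
  "preserves_lebesgue \<phi> \<longleftrightarrow>
     (\<forall>A \<in> sets lebesgue. \<phi> ` A \<in> sets lebesgue \<and> emeasure lebesgue (\<phi> ` A) = emeasure lebesgue A)"

definition K_const :: "('a::euclidean_space \<Rightarrow> 'a) \<Rightarrow> real" where
  "K_const \<phi> = (SUP xy \<in> {(x, y). x \<noteq> y}.
      dist (\<phi> (fst xy)) (\<phi> (snd xy)) / dist (fst xy) (snd xy)
    + dist (fst xy) (snd xy) / dist (\<phi> (fst xy)) (\<phi> (snd xy)))"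

definition rho :: "real \<Rightarrow> real \<Rightarrow> real" where
  "rho a r = (if a > 0 then r powr a else ln r)"

end

theory Submission
  imports Defs
begin

lemma mball: fixes c :: "'a::euclidean_space" assumes "r \<ge> 0"
  shows "measure lebesgue (ball c r) = r ^ DIM('a) * measure lebesgue (ball (0::'a) 1)"
  using content_ball_conv_unit_ball[OF assms, of c] by simp

lemma packing:
  fixes T :: "'a::euclidean_space set"
  assumes T: "finite T" and t: "t > 0"
    and sep: "\<And>c d. c \<in> T \<Longrightarrow> d \<in> T \<Longrightarrow> c \<noteq> d \<Longrightarrow> 2*t \<le> dist c d"
    and sub: "\<And>c. c \<in> T \<Longrightarrow> ball c t \<subseteq> A"
    and A: "A \<in> sets lebesgue" "emeasure lebesgue A < \<infinity>"
  shows "real (card T) * (t^DIM('a) * measure lebesgue (ball (0::'a) 1)) \<le> measure lebesgue A"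
proof -
  have dj: "disjoint_family_on (\<lambda>c. ball c t) T"
    unfolding disjoint_family_on_def
  proof (intro ballI impI)
    fix c d assume "c \<in> T" "d \<in> T" "c \<noteq> d"
    then have "2*t \<le> dist c d" using sep by auto
    then show "ball c t \<inter> ball d t = {}"
      by (auto simp: mem_ball) (metis dist_commute dist_triangle less_le_trans add_strict_mono mult_2 not_le order_trans)
  qed
  have "measure lebesgue (\<Union>c\<in>T. ball c t) = (\<Sum>c\<in>T. measure lebesgue (ball c t))"
    proof (rule measure_finite_Union[OF T _ dj])
    show "(\<lambda>c. ball c t) ` T \<subseteq> sets lebesgue" by auto
    fix c show "emeasure lebesgue (ball c t) \<noteq> \<infinity>"
      using emeasure_lborel_ball_finite[of c t] by simp
  qed
  also have "\<dots> = real (card T) * (t^DIM('a) * measure lebesgue (ball (0::'a) 1))"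
    proof -
    have "\<And>c::'a. measure lebesgue (ball c t) = t^DIM('a) * measure lebesgue (ball (0::'a) 1)"
      by (rule mball) (use t in simp)
    then show ?thesis by (simp only: sum_constant)
  qed
  finally have eq: "measure lebesgue (\<Union>c\<in>T. ball c t) = real (card T) * (t^DIM('a) * measure lebesgue (ball (0::'a) 1))" .
  have "measure lebesgue (\<Union>c\<in>T. ball c t) \<le> measure lebesgue A"
    apply (rule measure_mono_fmeasurable)
    using sub A T by (auto intro: fmeasurableI)
  with eq show ?thesis by simp
qed

lemma K_props:
  fixes \<phi> :: "'a::euclidean_space \<Rightarrow> 'a"
  assumes "bi_lipschitz_homeo \<phi>"
  shows "K_const \<phi> \<ge> 1" "\<And>x y. dist x y \<le> K_const \<phi> * dist (\<phi> x) (\<phi> y)"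
proof -
  obtain \<psi> where hom: "homeomorphism UNIV UNIV \<phi> \<psi>"
    using assms unfolding bi_lipschitz_homeo_def by blast
  obtain L where L: "\<forall>x y. dist (\<phi> x) (\<phi> y) \<le> L * dist x y \<and> dist x y \<le> L * dist (\<phi> x) (\<phi> y)"
    using assms unfolding bi_lipschitz_homeo_def by blast
  have inv: "\<And>x. \<psi> (\<phi> x) = x" using hom unfolding homeomorphism_def by auto
  have pos: "dist (\<phi> x) (\<phi> y) > 0" if "x \<noteq> y" for x y
    using that inv by (metis zero_less_dist_iff)
  define f where "f = (\<lambda>xy::'a\<times>'a. dist (\<phi> (fst xy)) (\<phi> (snd xy)) / dist (fst xy) (snd xy)
    + dist (fst xy) (snd xy) / dist (\<phi> (fst xy)) (\<phi> (snd xy)))"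
  have K: "K_const \<phi> = (SUP xy \<in> {(x, y). x \<noteq> y}. f xy)"
    unfolding K_const_def f_def by simp
  have fb: "f (x,y) \<le> 2 * L" if "x \<noteq> y" for x y
  proof -
    have d: "dist x y > 0" using that by simp
    have "dist (\<phi> x) (\<phi> y) / dist x y \<le> L" using L d by (simp add: divide_le_eq)
    moreover have "dist x y / dist (\<phi> x) (\<phi> y) \<le> L" using L pos[OF that] by (simp add: divide_le_eq)
    ultimately show ?thesis unfolding f_def by simp
  qed
  have bdd: "bdd_above (f ` {(x, y). x \<noteq> y})"
    using fb by (intro bdd_aboveI[of _ "2*L"]) auto
  have up: "f (x,y) \<le> K_const \<phi>" if "x \<noteq> y" for x y
    unfolding K by (rule cSUP_upper[OF _ bdd]) (use that in auto)
  show "\<And>x y. dist x y \<le> K_const \<phi> * dist (\<phi> x) (\<phi> y)"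
  proof -
    fix x y show "dist x y \<le> K_const \<phi> * dist (\<phi> x) (\<phi> y)"
    proof (cases "x = y")
      case False
      have "dist x y / dist (\<phi> x) (\<phi> y) \<le> f (x,y)" unfolding f_def by simp
      with up[OF False] have "dist x y / dist (\<phi> x) (\<phi> y) \<le> K_const \<phi>" by linarith
      then show ?thesis using pos[OF False] by (simp add: divide_le_eq mult.commute)
    qed simp
  qed
  obtain b :: 'a where b: "b \<in> Basis" using nonempty_Basis by blast
  then have b0: "b \<noteq> 0" by auto
  define u where "u = dist (\<phi> 0) (\<phi> b) / dist 0 b"
  have u: "u > 0" unfolding u_def using pos[of 0 b] b0 by simp
  have "f (0,b) = u + 1/u" unfolding f_def u_def by simp
  moreover have "u + 1/u \<ge> 1"
  proof (cases "u \<ge> 1")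
    case True then show ?thesis using u by (simp add: add_increasing2)
  next
    case False then have "1/u \<ge> 1" using u by (simp add: field_simps)
    then show ?thesis using u by linarith
  qed
  ultimately show "K_const \<phi> \<ge> 1" using up[of 0 b] b0 by auto
qed

lemma arith_pw:
  fixes q B \<rho> p :: real
  assumes "0 \<le> q" "q \<le> B" "1 \<le> B" "0 \<le> \<rho>" "1 \<le> p"
  shows "(q * \<rho> powr p) powr (1/p) \<le> B * \<rho>"
proof -
  have "(q * \<rho> powr p) powr (1/p) = q powr (1/p) * (\<rho> powr p) powr (1/p)"
    using assms by (simp add: powr_mult)
  also have "(\<rho> powr p) powr (1/p) = \<rho>"
    using assms by (simp add: powr_powr)
  finally have e: "(q * \<rho> powr p) powr (1/p) = q powr (1/p) * \<rho>" .
  have "q powr (1/p) \<le> B"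
  proof (cases "q \<le> 1")
    case True
    then have "q powr (1/p) \<le> 1" using assms by (intro powr_le1) auto
    then show ?thesis using assms by linarith
  next
    case False
    then have "q powr (1/p) \<le> q powr 1" using assms by (intro powr_mono) auto
    then show ?thesis using assms False by simp
  qed
  then show ?thesis unfolding e using assms by (simp add: mult_right_mono)
qed

lemma main_lemma:
  fixes \<phi> :: "'a::euclidean_space \<Rightarrow> 'a" and a r :: real
  assumes bl: "bi_lipschitz_homeo \<phi>" and pl: "preserves_lebesgue \<phi>" and r: "r > 0" and a: "0 \<le> a"
  shows "\<exists>(I::nat set) (c::nat \<Rightarrow> 'a) (s::nat \<Rightarrow> real).
           (\<forall>k\<in>I. s k > 0) \<and>
           \<phi> ` ball x0 r \<subseteq> (\<Union>k\<in>I. ball (c k) (2 * s k)) \<and>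
           (\<forall>z. finite {k\<in>I. z \<in> ball (c k) (2 * s k)} \<and>
                card {k\<in>I. z \<in> ball (c k) (2 * s k)} \<le> 3 ^ DIM('a)) \<and>
           (\<forall>k\<in>I. \<forall>l\<in>I. k \<noteq> l \<longrightarrow> ball (c k) (s k) \<inter> ball (c l) (s l) = {}) \<and>
           (\<forall>p::real. p \<ge> 1 \<longrightarrow>
              (\<lambda>k. measure lebesgue (ball (c k) (s k)) * \<bar>rho a (r / s k)\<bar> powr p) summable_on I \<and>
              ((1 / measure lebesgue (ball x0 r)) *
                 (\<Sum>\<^sub>\<infinity>k\<in>I. measure lebesgue (ball (c k) (s k)) * \<bar>rho a (r / s k)\<bar> powr p))
                 powr (1 / p)
              \<le> 2 ^ DIM('a) * rho a (K_const \<phi>))"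
proof -
  define K where "K = K_const \<phi>"
  have K1: "K \<ge> 1" and Kd: "\<And>x y. dist x y \<le> K * dist (\<phi> x) (\<phi> y)"
    using K_props[OF bl] unfolding K_def by auto
  obtain \<psi> where hom: "homeomorphism UNIV UNIV \<phi> \<psi>"
    using bl unfolding bi_lipschitz_homeo_def by blast
  have \<phi>\<psi>: "\<And>y. \<phi> (\<psi> y) = y" using hom unfolding homeomorphism_def by auto
  define t where "t = r / K"
  have t: "t > 0" unfolding t_def using r K1 by simp
  have Kt: "K * t = r" unfolding t_def using K1 by simp
  have rt: "r / t = K" unfolding t_def using K1 r by simp
  define V where "V = measure lebesgue (ball (0::'a) 1)"
  have V: "V > 0" unfolding V_def by simp
  define A where "A = \<phi> ` ball x0 (2*r)"
  have Bs: "ball x0 (2*r) \<in> sets lebesgue" by simp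
  have As: "A \<in> sets lebesgue" and Ae: "emeasure lebesgue A = emeasure lebesgue (ball x0 (2*r))"
    using bspec[OF pl[unfolded preserves_lebesgue_def] Bs] unfolding A_def by blast+
  have Bf: "emeasure lebesgue (ball x0 (2*r)) < \<infinity>"
    using emeasure_lborel_ball_finite[of x0 "2*r"] by (simp add: less_top)
  have Af: "emeasure lebesgue A < \<infinity>" using Ae Bf by simp
  have Am: "measure lebesgue A = (2*r)^DIM('a) * V"
    using Ae mball[of "2*r" x0] r unfolding measure_def V_def by simp
  have sub: "ball c t \<subseteq> A" if cB: "c \<in> \<phi> ` ball x0 r" for c
  proof
    fix y assume y: "y \<in> ball c t"
    obtain b where b: "b \<in> ball x0 r" "c = \<phi> b" using cB by auto
    have "dist (\<psi> y) b \<le> K * dist (\<phi> (\<psi> y)) (\<phi> b)" by (rule Kd)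
    also have "\<dots> = K * dist y c" using \<phi>\<psi> b by simp
    also have "\<dots> < K * t" using y K1 by (simp add: dist_commute)
    finally have "dist (\<psi> y) b < r" using Kt by simp
    moreover have "dist x0 b < r" using b(1) by simp
    moreover have "dist x0 (\<psi> y) \<le> dist x0 b + dist b (\<psi> y)" by (rule dist_triangle)
    ultimately have "dist x0 (\<psi> y) < 2*r" by (simp add: dist_commute)
    then have "\<psi> y \<in> ball x0 (2*r)" by simp
    moreover have "y = \<phi> (\<psi> y)" by (simp add: \<phi>\<psi>)
    ultimately show "y \<in> A" unfolding A_def by (intro image_eqI)
  qed
  define P where "P S \<longleftrightarrow> S \<subseteq> \<phi> ` ball x0 r \<and> finite S \<and> (\<forall>c\<in>S. \<forall>e\<in>S. c \<noteq> e \<longrightarrow> 2*t \<le> dist c e)" for S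
  have pack: "real (card S) * (t^DIM('a) * V) \<le> (2*r)^DIM('a) * V" if "P S" for S
  proof -
    have "real (card S) * (t^DIM('a) * V) \<le> measure lebesgue A"
      unfolding V_def
    proof (rule packing[OF _ t _ _ As Af])
      show "finite S" using that unfolding P_def by blast
      show "\<And>c d. c \<in> S \<Longrightarrow> d \<in> S \<Longrightarrow> c \<noteq> d \<Longrightarrow> 2*t \<le> dist c d"
        using that unfolding P_def by blast
      show "\<And>c. c \<in> S \<Longrightarrow> ball c t \<subseteq> A"
      proof -
        fix c assume "c \<in> S"
        then have "c \<in> \<phi> ` ball x0 r" using that unfolding P_def by blast
        then show "ball c t \<subseteq> A" by (rule sub)
      qed
    qed
    then show ?thesis using Am by simp
  qed
  have cb: "card S \<le> nat \<lceil>(2*K)^DIM('a)\<rceil>" if "P S" for S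
  proof -
    have e: "(2*r)^DIM('a) * V = ((2*K)^DIM('a)) * (t^DIM('a) * V)"
      unfolding Kt[symmetric] by (simp add: power_mult_distrib)
    have "real (card S) * (t^DIM('a) * V) \<le> ((2*K)^DIM('a)) * (t^DIM('a) * V)"
      using pack[OF that] unfolding e .
    moreover have "t^DIM('a) * V > 0" using t V by simp
    ultimately have "real (card S) \<le> (2*K)^DIM('a)" by (rule mult_right_le_imp_le)
    also have "\<dots> \<le> real (nat \<lceil>(2*K)^DIM('a)\<rceil>)" by (rule real_nat_ceiling_ge)
    finally show ?thesis by (simp only: of_nat_le_iff)
  qed
  have P0: "P {}" unfolding P_def by simp
  have "\<exists>S. P S \<and> (\<forall>S'. P S' \<longrightarrow> card S' \<le> card S)"
    by (rule ex_has_greatest_nat[of P "{}" card "Suc (nat \<lceil>(2*K)^DIM('a)\<rceil>)"])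
       (use P0 cb in \<open>auto simp: less_Suc_eq_le\<close>)
  then obtain S where PS: "P S" and Smax: "\<And>S'. P S' \<Longrightarrow> card S' \<le> card S" by blast
  define n where "n = card S"
  have cS: "card S = n" unfolding n_def ..
  have nmax: "\<And>S'. P S' \<Longrightarrow> card S' \<le> n" unfolding n_def by (rule Smax)
  have Ssub: "S \<subseteq> \<phi> ` ball x0 r" and Sfin: "finite S"
    and Ssep: "\<And>c e. c \<in> S \<Longrightarrow> e \<in> S \<Longrightarrow> c \<noteq> e \<Longrightarrow> 2*t \<le> dist c e"
    using PS unfolding P_def by auto
  have cover: "\<exists>c\<in>S. dist c y < 2*t" if y: "y \<in> \<phi> ` ball x0 r" for y
  proof (rule ccontr)
    assume "\<not> ?thesis"
    then have far: "\<And>c. c \<in> S \<Longrightarrow> 2*t \<le> dist c y" by auto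
    have yS: "y \<notin> S" using far[of y] t by auto
    have "P (insert y S)" unfolding P_def using Ssub Sfin Ssep far y
      by (auto simp: dist_commute)
    then have "card (insert y S) \<le> n" by (rule nmax)
    then show False using yS Sfin cS by simp
  qed
  obtain h where h: "bij_betw h {0..<n} S" using ex_bij_betw_nat_finite[OF Sfin] cS by auto
  have hS: "\<And>k. k \<in> {0..<n} \<Longrightarrow> h k \<in> S" using h by (auto simp: bij_betw_def)
  have hinj: "inj_on h {0..<n}" using h by (auto simp: bij_betw_def)
  have himg: "h ` {0..<n} = S" using h by (auto simp: bij_betw_def)
  have rhopos: "rho a K \<ge> 0" unfolding rho_def using K1 by auto
  have G1: "\<phi> ` ball x0 r \<subseteq> (\<Union>k\<in>{0..<n}. ball (h k) (2 * t))"
  proof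
    fix y assume "y \<in> \<phi> ` ball x0 r"
    then obtain c where "c \<in> S" "dist c y < 2*t" using cover by blast
    then show "y \<in> (\<Union>k\<in>{0..<n}. ball (h k) (2 * t))" using himg by auto
  qed
  have G2: "finite {k\<in>{0..<n}. z \<in> ball (h k) (2 * t)} \<and>
                card {k\<in>{0..<n}. z \<in> ball (h k) (2 * t)} \<le> 3 ^ DIM('a)" for z
  proof
    show "finite {k\<in>{0..<n}. z \<in> ball (h k) (2 * t)}" by simp
    define T where "T = {c\<in>S. z \<in> ball c (2*t)}"
    have "h ` {k\<in>{0..<n}. z \<in> ball (h k) (2 * t)} = T"
      unfolding T_def using himg by auto
    moreover have "inj_on h {k\<in>{0..<n}. z \<in> ball (h k) (2 * t)}"
      using hinj by (rule inj_on_subset) auto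
    ultimately have ceq: "card {k\<in>{0..<n}. z \<in> ball (h k) (2 * t)} = card T"
      using card_image by fastforce
    have "real (card T) * (t^DIM('a) * V) \<le> measure lebesgue (ball z (3*t))"
      unfolding V_def
    proof (rule packing[OF _ t])
      show "finite T" unfolding T_def using Sfin by simp
      show "\<And>c d. c \<in> T \<Longrightarrow> d \<in> T \<Longrightarrow> c \<noteq> d \<Longrightarrow> 2*t \<le> dist c d"
        unfolding T_def using Ssep by auto
      show "ball c t \<subseteq> ball z (3*t)" if "c \<in> T" for c
      proof
        fix x assume "x \<in> ball c t"
        moreover have "dist c z < 2*t" using that unfolding T_def by simp
        ultimately show "x \<in> ball z (3*t)"
          by (smt (verit, ccfv_SIG) dist_commute dist_triangle mem_ball)
      qed
      show "ball z (3*t) \<in> sets lebesgue" by simp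
      show "emeasure lebesgue (ball z (3*t)) < \<infinity>"
        using emeasure_lborel_ball_finite[of z "3*t"] by (simp add: less_top)
    qed
    also have "\<dots> = (3*t)^DIM('a) * V" unfolding V_def by (rule mball) (use t in simp)
    also have "\<dots> = real (3^DIM('a)) * (t^DIM('a) * V)" by (simp add: power_mult_distrib)
    finally have "real (card T) \<le> real (3^DIM('a))" using t V by (simp add: mult_le_cancel_right)
    then show "card {k\<in>{0..<n}. z \<in> ball (h k) (2 * t)} \<le> 3 ^ DIM('a)"
      unfolding ceq by linarith
  qed
  have G3: "\<forall>k\<in>{0..<n}. \<forall>l\<in>{0..<n}. k \<noteq> l \<longrightarrow> ball (h k) t \<inter> ball (h l) t = {}"
  proof (intro ballI impI)
    fix k l assume kl: "k \<in> {0..<n}" "l \<in> {0..<n}" "k \<noteq> l"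
    then have "h k \<noteq> h l" using hinj by (meson inj_on_contraD)
    then have "2*t \<le> dist (h k) (h l)" using Ssep hS kl by auto
    then show "ball (h k) t \<inter> ball (h l) t = {}"
      by (auto simp: mem_ball) (smt (verit, ccfv_SIG) dist_commute dist_triangle)
  qed
  have G4: "(\<lambda>k. measure lebesgue (ball (h k) t) * \<bar>rho a (r / t)\<bar> powr p) summable_on {0..<n} \<and>
              ((1 / measure lebesgue (ball x0 r)) *
                 (\<Sum>\<^sub>\<infinity>k\<in>{0..<n}. measure lebesgue (ball (h k) t) * \<bar>rho a (r / t)\<bar> powr p))
                 powr (1 / p)
              \<le> 2 ^ DIM('a) * rho a (K_const \<phi>)" if p: "p \<ge> 1" for p
  proof
    show "(\<lambda>k. measure lebesgue (ball (h k) t) * \<bar>rho a (r / t)\<bar> powr p) summable_on {0..<n}" by simp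
    have mb: "\<And>c::'a. measure lebesgue (ball c t) = t^DIM('a) * V"
      unfolding V_def by (rule mball) (use t in simp)
    have mB: "measure lebesgue (ball x0 r) = r^DIM('a) * V"
      unfolding V_def by (rule mball) (use r in simp)
    have sumeq: "(\<Sum>\<^sub>\<infinity>k\<in>{0..<n}. measure lebesgue (ball (h k) t) * \<bar>rho a (r / t)\<bar> powr p)
       = real n * (t^DIM('a) * V) * \<bar>rho a K\<bar> powr p"
      by (simp add: mb rt)
    define q where "q = real n * (t^DIM('a) * V) / (r^DIM('a) * V)"
    have q0: "q \<ge> 0" unfolding q_def using t r V by simp
    have "real n * (t^DIM('a) * V) \<le> (2*r)^DIM('a) * V" using pack[OF PS] cS by simp
    then have "q \<le> 2^DIM('a)" unfolding q_def using r V
      by (simp add: divide_le_eq power_mult_distrib mult.assoc)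
    then have "(q * \<bar>rho a K\<bar> powr p) powr (1/p) \<le> 2^DIM('a) * \<bar>rho a K\<bar>"
      by (intro arith_pw q0) (use p in auto)
    moreover have "(1 / measure lebesgue (ball x0 r)) * (real n * (t^DIM('a) * V) * \<bar>rho a K\<bar> powr p)
       = q * \<bar>rho a K\<bar> powr p" unfolding q_def mB by simp
    ultimately show "((1 / measure lebesgue (ball x0 r)) *
                 (\<Sum>\<^sub>\<infinity>k\<in>{0..<n}. measure lebesgue (ball (h k) t) * \<bar>rho a (r / t)\<bar> powr p))
                 powr (1 / p)
              \<le> 2 ^ DIM('a) * rho a (K_const \<phi>)"
      unfolding sumeq using rhopos K_def by simp
  qed
  show ?thesis
    apply (rule exI[of _ "{0..<n}"], rule exI[of _ h], rule exI[of _ "\<lambda>_. t"])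
    using t G1 G2 G3 G4 by auto
qed


theorem lemma1p1:
  "\<exists>N::nat. \<forall>a::real. 0 \<le> a \<and> a \<le> 1 \<longrightarrow>
     (\<exists>C::real \<Rightarrow> real. \<forall>(\<phi>::'a::euclidean_space \<Rightarrow> 'a) x0 r.
        bi_lipschitz_homeo \<phi> \<and> preserves_lebesgue \<phi> \<and> r > 0 \<longrightarrow>
        (\<exists>(I::nat set) (c::nat \<Rightarrow> 'a) (s::nat \<Rightarrow> real).
           (\<forall>k\<in>I. s k > 0) \<and>
           \<phi> ` ball x0 r \<subseteq> (\<Union>k\<in>I. ball (c k) (2 * s k)) \<and>
           (\<forall>z. finite {k\<in>I. z \<in> ball (c k) (2 * s k)} \<and>
                card {k\<in>I. z \<in> ball (c k) (2 * s k)} \<le> N) \<and>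
           (\<forall>k\<in>I. \<forall>l\<in>I. k \<noteq> l \<longrightarrow> ball (c k) (s k) \<inter> ball (c l) (s l) = {}) \<and>
           (\<forall>p::real. p \<ge> 1 \<longrightarrow>
              (\<lambda>k. measure lebesgue (ball (c k) (s k)) * \<bar>rho a (r / s k)\<bar> powr p) summable_on I \<and>
              ((1 / measure lebesgue (ball x0 r)) *
                 (\<Sum>\<^sub>\<infinity>k\<in>I. measure lebesgue (ball (c k) (s k)) * \<bar>rho a (r / s k)\<bar> powr p))
                 powr (1 / p)
              \<le> C p * rho a (K_const \<phi>))))"
apply (intro exI[of _ "3 ^ DIM('a)"] allI impI exI[of _ "\<lambda>p. 2 ^ DIM('a)"])
  apply (rule main_lemma)
  apply auto
  done

end
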